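(* Let $d,k,m\in\mathbb{N}$ with $2k<m$, and let $N=m\cdot2(k+1)$. Let $\pi:\mathbb{Z}^d\to\mathbb{T}_N^d=\mathbb{Z}^d/(N\mathbb{Z})^d$ be the natural quotient map. Then for every set $\mathcal{S}\subset\mathbb{T}_N^d$ with $|\mathcal{S}|\le k$ there is some $\boldsymbol{v}\in\mathbb{Z}^d$ such that \[\bigcup_{\boldsymbol{t}\in\pi^{-1}(\mathcal{S})\cap(\boldsymbol{v}+[1,N]^d)}\big(\boldsymbol{t}+[-m,m]^d\big)\subset\boldsymbol{v}+[1,N]^d.\]
   Context: $[a,b]$ denotes the integer interval $\{a,a+1,\dots,b\}$ and $[a,b]^d$ its $d$-fold product in $\mathbb{Z}^d$. *)

theory Defs
  imports Main
begin

text \<open>Points of Z^d are modelled as functions nat => int that vanish outside {0..<d}.\<close>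

definition zvecs :: "nat \<Rightarrow> (nat \<Rightarrow> int) set" where
  "zvecs d = {x. \<forall>i\<ge>d. x i = 0}"

text \<open>The discrete torus T_N^d = Z^d/(NZ)^d, with canonical representatives in [0,N-1]^d.\<close>

definition torus :: "int \<Rightarrow> nat \<Rightarrow> (nat \<Rightarrow> int) set" where
  "torus N d = {x. (\<forall>i<d. 0 \<le> x i \<and> x i < N) \<and> (\<forall>i\<ge>d. x i = 0)}"

definition torus_proj :: "int \<Rightarrow> nat \<Rightarrow> (nat \<Rightarrow> int) \<Rightarrow> (nat \<Rightarrow> int)" where
  "torus_proj N d x = (\<lambda>i. if i < d then x i mod N else 0)"

definition cube :: "nat \<Rightarrow> (nat \<Rightarrow> int) \<Rightarrow> int \<Rightarrow> int \<Rightarrow> (nat \<Rightarrow> int) set" where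
  "cube d v a b = {x \<in> zvecs d. \<forall>i<d. v i + a \<le> x i \<and> x i \<le> v i + b}"

end

theory Submission
  imports Defs
begin

lemma divq: fixes a b q :: int assumes "b > 0" "b*q \<le> a" "a < b*(q+1)" shows "a div b = q"
proof -
  define r where "r = a - b*q"
  have r: "0 \<le> r" "r < b" using assms by (auto simp: r_def algebra_simps)
  have "a = r + q*b" by (simp add: r_def)
  then have "a div b = r div b + q" using assms(1) by simp
  also have "r div b = 0" using r by simp
  finally show ?thesis by simp
qed

lemma modhi: fixes a N :: int assumes "N \<le> a" "a < 2*N" shows "a mod N = a - N"
  by (smt (verit) assms minus_mod_self2 mod_pos_pos_trivial)

lemma key:
  fixes m k j t N :: int
  assumes m: "m > 0" and j: "0 \<le> j" "j \<le> k" and N: "N = m*2*(k+1)"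
    and t1: "2*m*j+m \<le> t" and t2: "t \<le> 2*m*j+m-1+N"
    and ne: "(t mod N) div (2*m) \<noteq> j"
  shows "2*m*j+2*m \<le> t \<and> t \<le> 2*m*j+N-1"
proof (rule ccontr)
  assume "\<not> ?thesis"
  then consider "t < 2*m*j+2*m" | "t > 2*m*j+N-1" by linarith
  then show False
  proof cases
    case 1
    have "2*m*j+2*m = 2*m*(j+1)" by (simp add: algebra_simps)
    also have "\<dots> \<le> 2*m*(k+1)" using j m by simp
    finally have "t < N" using 1 N by simp
    moreover have "0 \<le> 2*m*j" using m j by simp
    then have "0 \<le> t" using t1 m by linarith
    ultimately have "t mod N = t" by simp
    moreover have "t div (2*m) = j"
      by (rule divq) (use m t1 1 in \<open>auto simp: algebra_simps\<close>)
    ultimately show False using ne by simp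
  next
    case 2
    have "0 \<le> 2*m*j" using m j by simp
    then have "N \<le> t" using 2 by linarith
    moreover have "2*m*j+m-1 < N"
    proof -
      have "2*m*j \<le> 2*m*k" using m j by simp
      moreover have "N = 2*m*k + 2*m" using N by (simp add: algebra_simps)
      ultimately show ?thesis using m by linarith
    qed
    ultimately have "t mod N = t - N" using t2 by (intro modhi) auto
    moreover have "(t - N) div (2*m) = j"
      by (rule divq) (use m t2 2 in \<open>auto simp: algebra_simps\<close>)
    ultimately show False using ne by simp
  qed
qed

lemma pick:
  fixes S :: "(nat \<Rightarrow> int) set" and m :: int
  assumes "finite S" "card S \<le> k"
  shows "\<exists>j\<in>{0..int k}. \<forall>s\<in>S. s i div m \<noteq> j"
proof (rule ccontr)
  assume "\<not> ?thesis"
  then have "{0..int k} \<subseteq> (\<lambda>s. s i div m) ` S" by auto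
  then have "card {0..int k} \<le> card ((\<lambda>s. s i div m) ` S)"
    using assms by (intro card_mono) auto
  also have "\<dots> \<le> card S" using assms by (intro card_image_le) auto
  finally show False using assms by simp
qed

theorem proposition10:
  fixes d k m :: nat and N :: int and S :: "(nat \<Rightarrow> int) set"
  assumes "2 * k < m"
    and "N = int m * 2 * (int k + 1)"
    and "S \<subseteq> torus N d" and "finite S" and "card S \<le> k"
  shows "\<exists>v \<in> zvecs d.
           (\<Union>t \<in> {t \<in> zvecs d. torus_proj N d t \<in> S} \<inter> cube d v 1 N.
               cube d t (- int m) (int m))
           \<subseteq> cube d v 1 N"
proof -
  have "\<forall>i. \<exists>j\<in>{0..int k}. \<forall>s\<in>S. s i div (2*int m) \<noteq> j"
    using pick assms(4,5) by blast
  then obtain J where J: "\<And>i. J i \<in> {0..int k}" "\<And>i s. s \<in> S \<Longrightarrow> s i div (2*int m) \<noteq> J i"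
    by metis
  define v where "v = (\<lambda>i. if i < d then 2*int m*J i + int m - 1 else 0)"
  have vz: "v \<in> zvecs d" by (simp add: v_def zvecs_def)
  have mpos: "int m > 0" using assms(1) by simp
  show ?thesis
  proof (intro bexI[OF _ vz] subsetI)
    fix x assume "x \<in> (\<Union>t \<in> {t \<in> zvecs d. torus_proj N d t \<in> S} \<inter> cube d v 1 N.
               cube d t (- int m) (int m))"
    then obtain t where tS: "torus_proj N d t \<in> S" and tc: "t \<in> cube d v 1 N"
      and xc: "x \<in> cube d t (- int m) (int m)" by auto
    have "\<forall>i<d. v i + 1 \<le> x i \<and> x i \<le> v i + N"
    proof (intro allI impI)
      fix i assume i: "i < d"
      have ne: "(t i mod N) div (2*int m) \<noteq> J i"
        using J(2)[OF tS, of i] i by (simp add: torus_proj_def)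
      have t1: "2*int m*J i + int m \<le> t i" and t2: "t i \<le> 2*int m*J i + int m - 1 + N"
        using tc i by (auto simp: cube_def v_def)
      have "2*int m*J i+2*int m \<le> t i \<and> t i \<le> 2*int m*J i+N-1"
        using key[OF mpos _ _ assms(2)[unfolded mult.assoc[symmetric]] t1 t2 ne] J(1)[of i]
        by (auto simp: algebra_simps)
      moreover have "t i - int m \<le> x i" "x i \<le> t i + int m" using xc i by (auto simp: cube_def)
      ultimately show "v i + 1 \<le> x i \<and> x i \<le> v i + N" using i by (auto simp: v_def)
    qed
    moreover have "x \<in> zvecs d" using xc by (simp add: cube_def)
    ultimately show "x \<in> cube d v 1 N" by (simp add: cube_def)
  qed
qed

end
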